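(* For every level $j\in\{2,\dots,K\}$ and every $z\in[0,1]$, the marginal generating function of the number of waiting level-$j$ clients under $P$ satisfies $$\sum_{\mathbf n\in\mathbb N_0^K}P(\mathbf n)\,z^{n_j}=\frac{1-\sigma_j}{\eta_+(z)-\sigma_j}=\frac{1-\sigma_j}{r_j}\cdot\frac{\sigma_j-\eta_-(z)}{1-\sigma_j z}=\frac{1-\sigma_j}{1-\sigma_j z}\cdot\frac{1-z\,\eta_-(z)}{1-\eta_-(z)},$$ where $\eta_\pm(z)=\tfrac12\big[1+\sigma_j-r_jz\pm\sqrt{(1+\sigma_j-r_jz)^2-4\sigma_{j-1}}\big]$. That is, the level-$j$ marginal coincides with the low-priority marginal of a two-level problem with high-level intensity $\sigma_{j-1}$ and low-level intensity $r_j$ (levels below $j$ discarded).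
   Context: Fix integers $c\ge 1$, $K\ge 2$ and reals $r_1,\dots,r_K>0$ with $r=\sum_{k=1}^K r_k<1$ (here $r_k=\lambda_k/(c\mu)$ for an M/M/$c$ queue with $K$ non-preemptive priority levels, level 1 the highest). Write $\sigma_k=\sum_{j=1}^k r_j$, $\mathbf e_\kappa$ for the standard unit vectors of $\mathbb Z^K$, $\delta_{ij}$ for the Kronecker delta. Consider the equations for $(p_{\mathbf n})_{\mathbf n\in\mathbb N_0^K}$, with the convention $p_{\mathbf n}=0$ if some component of $\mathbf n$ is negative: $$(1+r)p_{\mathbf n}=\Big(\prod_{j=1}^K\delta_{0n_j}\Big)p_{\mathbf n}+\sum_{\kappa=1}^K\Big[r_\kappa p_{\mathbf n-\mathbf e_\kappa}+\Big(\prod_{j=1}^{\kappa-1}\delta_{0n_j}\Big)p_{\mathbf n+\mathbf e_\kappa}\Big],\quad \mathbf n\in\mathbb N_0^K .$$ These are the stationary balance equations for the states in which all $c$ servers are busy and $n_\kappa$ clients of level $\kappa$ wait in the queue; their nonnegative summable solutions form a one-dimensional cone, and $P$ denotes the unique solution with $\sum_{\mathbf n}P(\mathbf n)=1$. *)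

theory Defs
  imports "HOL-Analysis.Analysis"
begin

text \<open>States: vectors n in N_0^K, represented as functions nat => nat
  with components indexed 1..K and all other components 0.\<close>
definition states :: "nat \<Rightarrow> (nat \<Rightarrow> nat) set" where
  "states K = {n. \<forall>i. (i < 1 \<or> K < i) \<longrightarrow> n i = 0}"

definition sigma :: "(nat \<Rightarrow> real) \<Rightarrow> nat \<Rightarrow> real" where
  "sigma r k = (\<Sum>j=1..k. r j)"

text \<open>p evaluated at n - e_kappa, with the convention p = 0 at negative components.\<close>
definition p_minus :: "((nat \<Rightarrow> nat) \<Rightarrow> real) \<Rightarrow> (nat \<Rightarrow> nat) \<Rightarrow> nat \<Rightarrow> real" where
  "p_minus p n \<kappa> = (if n \<kappa> = 0 then 0 else p (n(\<kappa> := n \<kappa> - 1)))"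

definition p_plus :: "((nat \<Rightarrow> nat) \<Rightarrow> real) \<Rightarrow> (nat \<Rightarrow> nat) \<Rightarrow> nat \<Rightarrow> real" where
  "p_plus p n \<kappa> = p (n(\<kappa> := n \<kappa> + 1))"

definition balance :: "nat \<Rightarrow> (nat \<Rightarrow> real) \<Rightarrow> ((nat \<Rightarrow> nat) \<Rightarrow> real) \<Rightarrow> bool" where
  "balance K r p \<longleftrightarrow> (\<forall>n\<in>states K.
     (1 + sigma r K) * p n =
       (\<Prod>j=1..K. (if n j = 0 then 1 else 0)) * p n
       + (\<Sum>\<kappa>=1..K. r \<kappa> * p_minus p n \<kappa>
            + (\<Prod>j=1..\<kappa>-1. (if n j = 0 then 1 else 0)) * p_plus p n \<kappa>))"

definition eta_plus :: "(nat \<Rightarrow> real) \<Rightarrow> nat \<Rightarrow> real \<Rightarrow> real" where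
  "eta_plus r j z = (1 + sigma r j - r j * z
      + sqrt ((1 + sigma r j - r j * z)^2 - 4 * sigma r (j - 1))) / 2"

definition eta_minus :: "(nat \<Rightarrow> real) \<Rightarrow> nat \<Rightarrow> real \<Rightarrow> real" where
  "eta_minus r j z = (1 + sigma r j - r j * z
      - sqrt ((1 + sigma r j - r j * z)^2 - 4 * sigma r (j - 1))) / 2"

end

theory Submission
  imports Defs
begin

definition up :: "(nat \<Rightarrow> nat) \<Rightarrow> nat \<Rightarrow> nat \<Rightarrow> nat" where "up n k = n(k := Suc (n k))"
definition dn :: "(nat \<Rightarrow> nat) \<Rightarrow> nat \<Rightarrow> nat \<Rightarrow> nat" where "dn n k = n(k := n k - 1)"
definition ZZ :: "nat \<Rightarrow> nat \<Rightarrow> (nat\<Rightarrow>nat) set" where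
  "ZZ K k = {n \<in> states K. \<forall>i\<in>{1..k}. n i = 0}"
definition YY :: "nat \<Rightarrow> nat \<Rightarrow> (nat\<Rightarrow>nat) set" where
  "YY K k = {n \<in> ZZ K (k - 1). n k \<noteq> 0}"

lemma up_states: "n \<in> states K \<Longrightarrow> k \<in> {1..K} \<Longrightarrow> up n k \<in> states K"
  by (auto simp: states_def up_def)
lemma dn_states: "n \<in> states K \<Longrightarrow> dn n k \<in> states K"
  by (auto simp: states_def dn_def)
lemma dn_up[simp]: "dn (up n k) k = n"
  by (simp add: dn_def up_def)
lemma up_dn: "n k \<noteq> 0 \<Longrightarrow> up (dn n k) k = n"
  by (auto simp add: dn_def up_def)
lemma up_app: "up n k i = (if i = k then Suc (n i) else n i)"
  by (simp add: up_def)
lemma dn_app: "dn n k i = (if i = k then n i - 1 else n i)"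
  by (simp add: dn_def)
lemma ZZ_sub: "ZZ K k \<subseteq> states K" by (auto simp: ZZ_def)
lemma YY_sub: "YY K k \<subseteq> states K" by (auto simp: YY_def ZZ_def)
lemma ZZ_0: "ZZ K 0 = states K" by (auto simp: ZZ_def)
lemma ZZ_mono: "k \<le> k' \<Longrightarrow> ZZ K k' \<subseteq> ZZ K k" by (auto simp: ZZ_def)
lemma YY_eq: "1 \<le> k \<Longrightarrow> YY K k = ZZ K (k-1) - ZZ K k"
proof -
  assume k: "1 \<le> k"
  have e: "{1..k} = insert k {1..k-1}" using k by auto
  show ?thesis unfolding YY_def ZZ_def e by auto
qed

lemma prod_ind: "finite A \<Longrightarrow> (\<Prod>i\<in>A. if n i = 0 then 1 else (0::real)) = (if \<forall>i\<in>A. n i = 0 then 1 else 0)"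
  by (induct rule: finite_induct) simp_all

lemma summ_w:
  fixes P w :: "(nat \<Rightarrow> nat) \<Rightarrow> real"
  assumes "P summable_on states K" "\<forall>n\<in>states K. P n \<ge> 0" "A \<subseteq> states K"
    "\<And>n. n\<in>A \<Longrightarrow> \<bar>w n\<bar> \<le> 1"
  shows "(\<lambda>n. w n * P n) summable_on A"
proof -
  have PA: "P summable_on A" by (rule summable_on_subset[OF assms(1) assms(3)])
  have "(\<lambda>n. norm (w n * P n)) summable_on A"
  proof (rule Infinite_Sum.abs_summable_on_comparison_test'[OF PA])
    fix n assume n: "n \<in> A"
    have "norm (w n * P n) = \<bar>w n\<bar> * P n" using assms n by (auto simp: abs_mult)
    also have "\<dots> \<le> 1 * P n" using assms n by (intro mult_right_mono) auto
    finally show "norm (w n * P n) \<le> P n" by simp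
  qed
  then show ?thesis using summable_on_iff_abs_summable_on_real[of "\<lambda>n. w n * P n" A] by simp
qed

lemma has_sum_sumI: fixes f :: "'i \<Rightarrow> 'x \<Rightarrow> real" shows "finite I \<Longrightarrow> (\<And>i. i\<in>I \<Longrightarrow> (f i has_sum a i) A) \<Longrightarrow>
   ((\<lambda>x. \<Sum>i\<in>I. f i x) has_sum (\<Sum>i\<in>I. a i)) A"
proof (induct I rule: finite_induct)
  case (insert x F)
  have "((\<lambda>y. f x y + (\<Sum>i\<in>F. f i y)) has_sum (a x + sum a F)) A"
    by (rule has_sum_add) (use insert in auto)
  then show ?case using insert by simp
qed simp

lemma summ_w':
  fixes P w :: "(nat \<Rightarrow> nat) \<Rightarrow> real"
  assumes "P summable_on states K" "\<forall>n\<in>states K. P n \<ge> 0" "A \<subseteq> states K"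
    "\<And>n. n\<in>states K \<Longrightarrow> \<bar>w n\<bar> \<le> 1"
  shows "((\<lambda>n. w n * P n) has_sum infsum (\<lambda>n. w n * P n) A) A"
proof -
  have "(\<lambda>n. w n * P n) summable_on A" by (rule summ_w[OF assms(1-3)]) (use assms(3,4) in auto)
  then show ?thesis by (rule has_sum_infsum)
qed

lemma gen:
  fixes K :: nat and r :: "nat \<Rightarrow> real" and P :: "(nat \<Rightarrow> nat) \<Rightarrow> real"
    and w :: "(nat\<Rightarrow>nat) \<Rightarrow> real"
  assumes bal: "balance K r P" and nn: "\<forall>n\<in>states K. P n \<ge> 0"
    and sP: "P summable_on states K"
    and wb: "\<And>n. n \<in> states K \<Longrightarrow> \<bar>w n\<bar> \<le> 1"
  shows "(1 + sigma r K) * infsum (\<lambda>n. w n * P n) (states K) =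
    infsum (\<lambda>n. w n * P n) (ZZ K K) + (\<Sum>\<kappa>=1..K. r \<kappa> * infsum (\<lambda>n. w (up n \<kappa>) * P n) (states K)
       + infsum (\<lambda>n. w (dn n \<kappa>) * P n) (YY K \<kappa>))"
proof -
  define S where "S = states K"
  define IZ where "IZ = infsum (\<lambda>n. w n * P n) (ZZ K K)"
  have T0: "((\<lambda>n. w n * ((\<Prod>i=1..K. if n i = 0 then 1 else 0) * P n)) has_sum IZ) S"
  proof -
    have h: "((\<lambda>n. w n * P n) has_sum IZ) (ZZ K K)"
      unfolding IZ_def by (rule summ_w'[OF sP nn ZZ_sub wb])
    have "((\<lambda>n. w n * ((\<Prod>i=1..K. if n i = 0 then 1 else 0) * P n)) has_sum IZ) S
       \<longleftrightarrow> ((\<lambda>n. w n * P n) has_sum IZ) (ZZ K K)"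
      by (rule has_sum_cong_neutral) (auto simp: prod_ind ZZ_def S_def)
    then show ?thesis using h by simp
  qed
  define X where "X \<kappa> = infsum (\<lambda>n. w (up n \<kappa>) * P n) S" for \<kappa>
  have T1: "((\<lambda>n. r \<kappa> * (w n * p_minus P n \<kappa>)) has_sum (r \<kappa> * X \<kappa>)) S"
    if k: "\<kappa> \<in> {1..K}" for \<kappa>
  proof -
    have h: "((\<lambda>n. w (up n \<kappa>) * P n) has_sum X \<kappa>) S"
      unfolding X_def S_def
      by (rule summ_w'[OF sP nn order_refl]) (use wb up_states k in auto)
    define T where "T = {n \<in> S. n \<kappa> \<noteq> 0}"
    have "((\<lambda>n. w (up n \<kappa>) * P n) has_sum X \<kappa>) S = ((\<lambda>n. w n * p_minus P n \<kappa>) has_sum X \<kappa>) T"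
    proof (rule has_sum_reindex_bij_witness[where i="\<lambda>n. dn n \<kappa>" and j="\<lambda>n. up n \<kappa>"])
      show "\<And>a. a \<in> S \<Longrightarrow> up a \<kappa> \<in> T" using up_states k by (auto simp: T_def S_def up_def)
      show "\<And>b. b \<in> T \<Longrightarrow> up (dn b \<kappa>) \<kappa> = b" by (auto simp: T_def up_dn)
      show "\<And>b. b \<in> T \<Longrightarrow> dn b \<kappa> \<in> S" by (auto simp: T_def S_def dn_states)
      show "\<And>a. a \<in> S \<Longrightarrow> w (up a \<kappa>) * p_minus P (up a \<kappa>) \<kappa> = w (up a \<kappa>) * P a"
        by (simp add: p_minus_def up_def)
    qed auto
    also have "\<dots> = ((\<lambda>n. w n * p_minus P n \<kappa>) has_sum X \<kappa>) S"
      by (rule has_sum_cong_neutral) (auto simp: T_def p_minus_def)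
    finally have "((\<lambda>n. w n * p_minus P n \<kappa>) has_sum X \<kappa>) S" using h by simp
    then show ?thesis by (rule has_sum_cmult_right)
  qed
  define Y where "Y \<kappa> = infsum (\<lambda>n. w (dn n \<kappa>) * P n) (YY K \<kappa>)" for \<kappa>
  have T2: "((\<lambda>n. w n * ((\<Prod>i=1..\<kappa>-1. if n i = 0 then 1 else 0) * p_plus P n \<kappa>)) has_sum Y \<kappa>) S"
    if k: "\<kappa> \<in> {1..K}" for \<kappa>
  proof -
    have h: "((\<lambda>n. w (dn n \<kappa>) * P n) has_sum Y \<kappa>) (YY K \<kappa>)"
      unfolding Y_def
      by (rule summ_w'[OF sP nn YY_sub]) (use wb dn_states in auto)
    have "((\<lambda>n. w (dn n \<kappa>) * P n) has_sum Y \<kappa>) (YY K \<kappa>) = ((\<lambda>n. w n * P (up n \<kappa>)) has_sum Y \<kappa>) (ZZ K (\<kappa>-1))"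
    proof (rule has_sum_reindex_bij_witness[where i="\<lambda>n. up n \<kappa>" and j="\<lambda>n. dn n \<kappa>"])
      show "\<And>a. a \<in> YY K \<kappa> \<Longrightarrow> up (dn a \<kappa>) \<kappa> = a" by (auto simp: YY_def up_dn)
      show "\<And>a. a \<in> YY K \<kappa> \<Longrightarrow> dn a \<kappa> \<in> ZZ K (\<kappa> - 1)"
        by (auto simp: YY_def ZZ_def dn_states dn_app)
      show "\<And>b. b \<in> ZZ K (\<kappa> - 1) \<Longrightarrow> up b \<kappa> \<in> YY K \<kappa>"
        using k by (auto simp: YY_def ZZ_def up_states up_app)
      show "\<And>a. a \<in> YY K \<kappa> \<Longrightarrow> w (dn a \<kappa>) * P (up (dn a \<kappa>) \<kappa>) = w (dn a \<kappa>) * P a"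
        by (auto simp: YY_def up_dn)
    qed auto
    also have "\<dots> = ((\<lambda>n. w n * ((\<Prod>i=1..\<kappa>-1. if n i = 0 then 1 else 0) * p_plus P n \<kappa>)) has_sum Y \<kappa>) S"
      by (rule has_sum_cong_neutral) (auto simp: ZZ_def S_def prod_ind p_plus_def up_def)
    finally show ?thesis using h by simp
  qed
  have all: "((\<lambda>n. w n * ((\<Prod>i=1..K. if n i = 0 then 1 else 0) * P n) +
      (\<Sum>\<kappa>=1..K. r \<kappa> * (w n * p_minus P n \<kappa>) + w n * ((\<Prod>i=1..\<kappa>-1. if n i = 0 then 1 else 0) * p_plus P n \<kappa>)))
     has_sum (IZ + (\<Sum>\<kappa>=1..K. r \<kappa> * X \<kappa> + Y \<kappa>))) S"
  proof (rule has_sum_add[OF T0], rule has_sum_sumI)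
    fix \<kappa> assume k: "\<kappa> \<in> {1..K}"
    show "((\<lambda>n. r \<kappa> * (w n * p_minus P n \<kappa>) + w n * ((\<Prod>i=1..\<kappa>-1. if n i = 0 then 1 else 0) * p_plus P n \<kappa>))
      has_sum (r \<kappa> * X \<kappa> + Y \<kappa>)) S"
      by (intro has_sum_add T1[OF k] T2[OF k])
  qed simp
  have lhs: "((\<lambda>n. (1 + sigma r K) * (w n * P n)) has_sum ((1 + sigma r K) * infsum (\<lambda>n. w n * P n) S)) S"
    unfolding S_def by (intro has_sum_cmult_right summ_w'[OF sP nn order_refl wb])
  have "((\<lambda>n. (1 + sigma r K) * (w n * P n)) has_sum (IZ + (\<Sum>\<kappa>=1..K. r \<kappa> * X \<kappa> + Y \<kappa>))) S"
  proof -
    have "((\<lambda>n. (1 + sigma r K) * (w n * P n)) has_sum (IZ + (\<Sum>\<kappa>=1..K. r \<kappa> * X \<kappa> + Y \<kappa>))) S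
      \<longleftrightarrow> ((\<lambda>n. w n * ((\<Prod>i=1..K. if n i = 0 then 1 else 0) * P n) +
      (\<Sum>\<kappa>=1..K. r \<kappa> * (w n * p_minus P n \<kappa>) + w n * ((\<Prod>i=1..\<kappa>-1. if n i = 0 then 1 else 0) * p_plus P n \<kappa>)))
     has_sum (IZ + (\<Sum>\<kappa>=1..K. r \<kappa> * X \<kappa> + Y \<kappa>))) S"
    proof (rule has_sum_cong)
      fix n assume n: "n \<in> S"
      have e: "(1 + sigma r K) * P n = (\<Prod>j=1..K. (if n j = 0 then 1 else 0)) * P n
       + (\<Sum>\<kappa>=1..K. r \<kappa> * p_minus P n \<kappa>
            + (\<Prod>j=1..\<kappa>-1. (if n j = 0 then 1 else 0)) * p_plus P n \<kappa>)"
        using bal n unfolding balance_def S_def by (rule bspec)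
      show "(1 + sigma r K) * (w n * P n) = w n * ((\<Prod>i=1..K. if n i = 0 then 1 else 0) * P n) +
      (\<Sum>\<kappa>=1..K. r \<kappa> * (w n * p_minus P n \<kappa>) + w n * ((\<Prod>i=1..\<kappa>-1. if n i = 0 then 1 else 0) * p_plus P n \<kappa>))"
      proof -
        have "(1 + sigma r K) * (w n * P n) = w n * ((1 + sigma r K) * P n)" by simp
        also have "\<dots> = w n * ((\<Prod>j=1..K. (if n j = 0 then 1 else 0)) * P n)
       + w n * (\<Sum>\<kappa>=1..K. r \<kappa> * p_minus P n \<kappa>
            + (\<Prod>j=1..\<kappa>-1. (if n j = 0 then 1 else 0)) * p_plus P n \<kappa>)"
          unfolding e by (simp add: distrib_left)
        also have "w n * (\<Sum>\<kappa>=1..K. r \<kappa> * p_minus P n \<kappa>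
            + (\<Prod>j=1..\<kappa>-1. (if n j = 0 then 1 else 0)) * p_plus P n \<kappa>) =
            (\<Sum>\<kappa>=1..K. r \<kappa> * (w n * p_minus P n \<kappa>) + w n * ((\<Prod>i=1..\<kappa>-1. if n i = 0 then 1 else 0) * p_plus P n \<kappa>))"
          by (simp add: sum_distrib_left algebra_simps)
        finally show ?thesis .
      qed
    qed
    then show ?thesis using all by simp
  qed
  then have eq: "IZ + (\<Sum>\<kappa>=1..K. r \<kappa> * X \<kappa> + Y \<kappa>) = (1 + sigma r K) * infsum (\<lambda>n. w n * P n) S"
    using lhs by (rule has_sum_unique)
  show ?thesis using eq unfolding IZ_def X_def Y_def S_def by (rule sym)
qed

lemma tele:
  fixes f :: "(nat \<Rightarrow> nat) \<Rightarrow> real"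
  assumes sf: "f summable_on states K" and a: "1 \<le> a"
  shows "(\<Sum>\<kappa>=a..<a+d. infsum f (YY K \<kappa>)) = infsum f (ZZ K (a-1)) - infsum f (ZZ K (a+d-1))"
proof (induct d)
  case (Suc d)
  have s1: "f summable_on ZZ K k" for k using summable_on_subset[OF sf ZZ_sub] .
  have "infsum f (YY K (a+d)) = infsum f (ZZ K (a+d-1)) - infsum f (ZZ K (a+d))"
    using a by (simp add: YY_eq infsum_Diff s1 ZZ_mono)
  then show ?case using Suc a by simp
qed simp

definition II :: "((nat \<Rightarrow> nat) \<Rightarrow> real) \<Rightarrow> ((nat \<Rightarrow> nat) \<Rightarrow> real) \<Rightarrow> (nat \<Rightarrow> nat) set \<Rightarrow> real" where
  "II P f A = infsum (\<lambda>n. f n * P n) A"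

lemma sum_split3:
  fixes g :: "nat \<Rightarrow> real"
  assumes "1 \<le> j" "j \<le> K"
  shows "(\<Sum>\<kappa>=1..K. g \<kappa>) = (\<Sum>\<kappa>=1..<j. g \<kappa>) + g j + (\<Sum>\<kappa>=j+1..<K+1. g \<kappa>)"
proof -
  have "(\<Sum>\<kappa>=1..K. g \<kappa>) = (\<Sum>\<kappa>=1..<K+1. g \<kappa>)"
    by (simp add: atLeastLessThanSuc_atLeastAtMost)
  also have "\<dots> = (\<Sum>\<kappa>=1..<j. g \<kappa>) + (\<Sum>\<kappa>=j..<K+1. g \<kappa>)"
    using assms by (intro sum.atLeastLessThan_concat[symmetric]) auto
  also have "(\<Sum>\<kappa>=j..<K+1. g \<kappa>) = g j + (\<Sum>\<kappa>=j+1..<K+1. g \<kappa>)"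
    using assms by (subst sum.atLeast_Suc_lessThan) auto
  finally show ?thesis by simp
qed

lemma gen3:
  fixes K :: nat and r :: "nat \<Rightarrow> real" and P :: "(nat \<Rightarrow> nat) \<Rightarrow> real"
    and w w1 w2 w3 v u :: "(nat\<Rightarrow>nat) \<Rightarrow> real"
  assumes bal: "balance K r P" and nn: "\<forall>n\<in>states K. P n \<ge> 0"
    and sP: "P summable_on states K" and j: "2 \<le> j" "j \<le> K"
    and wb: "\<And>n. n \<in> states K \<Longrightarrow> \<bar>w n\<bar> \<le> 1"
    and w1b: "\<And>n. n \<in> states K \<Longrightarrow> \<bar>w1 n\<bar> \<le> 1"
    and w2b: "\<And>n. n \<in> states K \<Longrightarrow> \<bar>w2 n\<bar> \<le> 1"
    and w3b: "\<And>n. n \<in> states K \<Longrightarrow> \<bar>w3 n\<bar> \<le> 1"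
    and vb: "\<And>n. n \<in> states K \<Longrightarrow> \<bar>v n\<bar> \<le> 1"
    and ub: "\<And>n. n \<in> states K \<Longrightarrow> \<bar>u n\<bar> \<le> 1"
    and h1: "\<And>\<kappa> n. \<kappa> \<in> {1..<j} \<Longrightarrow> n \<in> states K \<Longrightarrow> w (up n \<kappa>) = w1 n"
    and h2: "\<And>n. n \<in> states K \<Longrightarrow> w (up n j) = w2 n"
    and h3: "\<And>\<kappa> n. \<kappa> \<in> {j+1..<K+1} \<Longrightarrow> n \<in> states K \<Longrightarrow> w (up n \<kappa>) = w3 n"
    and h4: "\<And>\<kappa> n. \<kappa> \<in> {1..<j} \<Longrightarrow> n \<in> YY K \<kappa> \<Longrightarrow> w (dn n \<kappa>) = v n"
    and h5: "\<And>\<kappa> n. \<kappa> \<in> {j+1..<K+1} \<Longrightarrow> n \<in> YY K \<kappa> \<Longrightarrow> w (dn n \<kappa>) = u n"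
  shows "(1 + sigma r K) * II P w (states K) = II P w (ZZ K K) + sigma r (j-1) * II P w1 (states K)
     + r j * II P w2 (states K) + (sigma r K - sigma r j) * II P w3 (states K)
     + (II P v (states K) - II P v (ZZ K (j-1))) + II P (\<lambda>n. w (dn n j)) (YY K j)
     + (II P u (ZZ K j) - II P u (ZZ K K))"
proof -
  define S where "S = states K"
  define g where "g \<kappa> = r \<kappa> * infsum (\<lambda>n. w (up n \<kappa>) * P n) (states K)
       + infsum (\<lambda>n. w (dn n \<kappa>) * P n) (YY K \<kappa>)" for \<kappa>
  have G: "(1 + sigma r K) * II P w S = II P w (ZZ K K) + (\<Sum>\<kappa>=1..K. g \<kappa>)"
    unfolding II_def g_def S_def by (rule gen[OF bal nn sP wb])
  have sv: "(\<lambda>n. v n * P n) summable_on states K" by (rule summ_w[OF sP nn order_refl vb])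
  have su: "(\<lambda>n. u n * P n) summable_on states K" by (rule summ_w[OF sP nn order_refl ub])
  have g1: "(\<Sum>\<kappa>=1..<j. g \<kappa>) = sigma r (j-1) * II P w1 S + (II P v S - II P v (ZZ K (j-1)))"
  proof -
    have "(\<Sum>\<kappa>=1..<j. g \<kappa>) = (\<Sum>\<kappa>=1..<j. r \<kappa> * II P w1 S + infsum (\<lambda>n. v n * P n) (YY K \<kappa>))"
    proof (rule sum.cong[OF refl])
      fix \<kappa> assume k: "\<kappa> \<in> {1..<j}"
      have "infsum (\<lambda>n. w (up n \<kappa>) * P n) (states K) = II P w1 S"
        unfolding II_def S_def by (rule infsum_cong) (simp add: h1[OF k])
      moreover have "infsum (\<lambda>n. w (dn n \<kappa>) * P n) (YY K \<kappa>) = infsum (\<lambda>n. v n * P n) (YY K \<kappa>)"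
        by (rule infsum_cong) (simp add: h4[OF k])
      ultimately show "g \<kappa> = r \<kappa> * II P w1 S + infsum (\<lambda>n. v n * P n) (YY K \<kappa>)"
        unfolding g_def by simp
    qed
    also have "\<dots> = (\<Sum>\<kappa>=1..<j. r \<kappa>) * II P w1 S + (\<Sum>\<kappa>=1..<j. infsum (\<lambda>n. v n * P n) (YY K \<kappa>))"
      by (simp only: sum.distrib sum_distrib_right)
    also have "(\<Sum>\<kappa>=1..<j. infsum (\<lambda>n. v n * P n) (YY K \<kappa>)) = II P v S - II P v (ZZ K (j-1))"
      using tele[OF sv, of 1 "j-1"] j by (simp add: II_def S_def ZZ_0)
    also have "(\<Sum>\<kappa>=1..<j. r \<kappa>) = sigma r (j-1)"
      unfolding sigma_def using j by (intro sum.cong) auto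
    finally show ?thesis .
  qed
  have g2: "g j = r j * II P w2 S + II P (\<lambda>n. w (dn n j)) (YY K j)"
  proof -
    have "infsum (\<lambda>n. w (up n j) * P n) (states K) = II P w2 S"
      unfolding II_def S_def by (rule infsum_cong) (simp add: h2)
    then show ?thesis unfolding g_def II_def by simp
  qed
  have g3: "(\<Sum>\<kappa>=j+1..<K+1. g \<kappa>) = (sigma r K - sigma r j) * II P w3 S + (II P u (ZZ K j) - II P u (ZZ K K))"
  proof -
    have "(\<Sum>\<kappa>=j+1..<K+1. g \<kappa>) = (\<Sum>\<kappa>=j+1..<K+1. r \<kappa> * II P w3 S + infsum (\<lambda>n. u n * P n) (YY K \<kappa>))"
    proof (rule sum.cong[OF refl])
      fix \<kappa> assume k: "\<kappa> \<in> {j+1..<K+1}"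
      have "infsum (\<lambda>n. w (up n \<kappa>) * P n) (states K) = II P w3 S"
        unfolding II_def S_def by (rule infsum_cong) (simp add: h3[OF k])
      moreover have "infsum (\<lambda>n. w (dn n \<kappa>) * P n) (YY K \<kappa>) = infsum (\<lambda>n. u n * P n) (YY K \<kappa>)"
        by (rule infsum_cong) (simp add: h5[OF k])
      ultimately show "g \<kappa> = r \<kappa> * II P w3 S + infsum (\<lambda>n. u n * P n) (YY K \<kappa>)"
        unfolding g_def by simp
    qed
    also have "\<dots> = (\<Sum>\<kappa>=j+1..<K+1. r \<kappa>) * II P w3 S + (\<Sum>\<kappa>=j+1..<K+1. infsum (\<lambda>n. u n * P n) (YY K \<kappa>))"
      by (simp only: sum.distrib sum_distrib_right)
    also have "(\<Sum>\<kappa>=j+1..<K+1. infsum (\<lambda>n. u n * P n) (YY K \<kappa>)) = II P u (ZZ K j) - II P u (ZZ K K)"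
      using tele[OF su, of "j+1" "K-j"] j by (simp add: II_def)
    also have "(\<Sum>\<kappa>=j+1..<K+1. r \<kappa>) = sigma r K - sigma r j"
    proof -
      have "sigma r K = (\<Sum>\<kappa>=1..<j+1. r \<kappa>) + (\<Sum>\<kappa>=j+1..<K+1. r \<kappa>)"
      proof -
        have "sigma r K = (\<Sum>\<kappa>=1..<K+1. r \<kappa>)"
          unfolding sigma_def by (simp add: atLeastLessThanSuc_atLeastAtMost)
        also have "\<dots> = (\<Sum>\<kappa>=1..<j+1. r \<kappa>) + (\<Sum>\<kappa>=j+1..<K+1. r \<kappa>)"
          using j by (intro sum.atLeastLessThan_concat[symmetric]) auto
        finally show ?thesis .
      qed
      moreover have "sigma r j = (\<Sum>\<kappa>=1..<j+1. r \<kappa>)"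
        unfolding sigma_def by (simp add: atLeastLessThanSuc_atLeastAtMost)
      ultimately show ?thesis by simp
    qed
    finally show ?thesis .
  qed
  show ?thesis using G g1 g2 g3 sum_split3[of j K g] j unfolding S_def by simp
qed

lemma II_cong: "(\<And>n. n \<in> A \<Longrightarrow> f n = g n) \<Longrightarrow> II P f A = II P g A"
  unfolding II_def by (rule infsum_cong) simp
lemma II_0: "(\<And>n. n \<in> A \<Longrightarrow> f n = 0) \<Longrightarrow> II P f A = 0"
  unfolding II_def by (rule infsum_0) simp
lemma II_zero[simp]: "II P (\<lambda>_. 0) A = 0" by (simp add: II_def)
lemma II_cmult: "II P (\<lambda>n. c * f n) A = c * II P f A"
  unfolding II_def by (simp add: infsum_cmult_right' mult.assoc)
lemma II_if: "II P (\<lambda>n. if b then f n else 0) A = (if b then II P f A else 0)"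
  unfolding II_def by simp
lemma II_if': "II P (if b then f else (\<lambda>_. 0)) A = (if b then II P f A else 0)"
  unfolding II_def by simp

locale setting =
  fixes K :: nat and r :: "nat \<Rightarrow> real" and P :: "(nat \<Rightarrow> nat) \<Rightarrow> real" and j :: nat and z :: real
  assumes rpos: "\<forall>k\<in>{1..K}. r k > 0" and rlt1: "sigma r K < 1" and bal: "balance K r P"
   and nn: "\<forall>n\<in>states K. P n \<ge> 0" and norm: "(P has_sum 1) (states K)"
   and j2: "2 \<le> j" and jK: "j \<le> K" and z0: "0 \<le> z" and z1: "z \<le> 1"
begin

lemma sP: "P summable_on states K" using has_sum_imp_summable[OF norm] .

definition hm where "hm n = (\<Sum>i=1..<j. n i)"

lemma up_eq: "up n k i = n i + (if i = k then 1 else 0)" by (simp add: up_def)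

lemma hm_up_lt: "\<kappa> \<in> {1..<j} \<Longrightarrow> hm (up n \<kappa>) = Suc (hm n)"
  unfolding hm_def up_eq by (simp add: sum.distrib)
lemma hm_up_ge: "\<kappa> \<notin> {1..<j} \<Longrightarrow> hm (up n \<kappa>) = hm n"
  unfolding hm_def by (rule sum.cong) (auto simp: up_def)
lemma hm_dn_lt: "\<kappa> \<in> {1..<j} \<Longrightarrow> n \<kappa> \<noteq> 0 \<Longrightarrow> hm n = Suc (hm (dn n \<kappa>))"
  using hm_up_lt[of \<kappa> "dn n \<kappa>"] up_dn[of n \<kappa>] by simp
lemma hm_dn_ge: "\<kappa> \<notin> {1..<j} \<Longrightarrow> hm (dn n \<kappa>) = hm n"
  unfolding hm_def by (rule sum.cong) (auto simp: dn_def)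
lemma hm_ZZ: "j - 1 \<le> k \<Longrightarrow> n \<in> ZZ K k \<Longrightarrow> hm n = 0"
  unfolding hm_def ZZ_def by auto

lemma zpow: "\<bar>z ^ k\<bar> \<le> 1" using z0 z1 by (simp add: power_le_one)

definition wH where "wH m n = (if hm n = m then z ^ n j else 0)"
definition H where "H m = II P (wH m) (states K)"
definition ZK where "ZK = II P (\<lambda>_. 1) (ZZ K K)"
definition R0 where "R0 = II P (\<lambda>_. 1) (ZZ K j)"
definition D where "D = II P (\<lambda>n. z ^ (n j - 1)) (YY K j)"
definition s where "s = sigma r (j-1)"

lemma wHb: "\<bar>wH m n\<bar> \<le> 1" using zpow by (simp add: wH_def)

lemma R1: "(1 + sigma r K) * H m = (if m=0 then ZK else 0) + s * (if m = 0 then 0 else H (m-1))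
   + r j * (z * H m) + (sigma r K - sigma r j) * H m + H (Suc m) + (if m = 0 then D else 0)
   + (if m=0 then R0 - ZK else 0)"
proof -
  have G: "(1 + sigma r K) * II P (wH m) (states K) = II P (wH m) (ZZ K K)
     + sigma r (j-1) * II P (if m = 0 then (\<lambda>_. 0) else wH (m-1)) (states K)
     + r j * II P (\<lambda>n. z * wH m n) (states K) + (sigma r K - sigma r j) * II P (wH m) (states K)
     + (II P (wH (Suc m)) (states K) - II P (wH (Suc m)) (ZZ K (j-1))) + II P (\<lambda>n. wH m (dn n j)) (YY K j)
     + (II P (\<lambda>_. if m = 0 then 1 else 0) (ZZ K j) - II P (\<lambda>_. if m = 0 then 1 else 0) (ZZ K K))"
  proof (rule gen3[OF bal nn sP j2 jK])
    show "\<And>n. \<bar>wH m n\<bar> \<le> 1" "\<And>n. \<bar>(if m = 0 then (\<lambda>_. 0) else wH (m-1)) n\<bar> \<le> 1"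
      "\<And>n. \<bar>z * wH m n\<bar> \<le> 1" "\<And>n. \<bar>wH (Suc m) n\<bar> \<le> 1"
      "\<And>n. \<bar>if m = 0 then 1 else 0::real\<bar> \<le> 1"
      using wHb z0 z1 by (auto simp: abs_mult intro: mult_le_one)
    show "wH m (up n \<kappa>) = (if m = 0 then (\<lambda>_. 0) else wH (m-1)) n" if "\<kappa> \<in> {1..<j}" for \<kappa> n
      using that hm_up_lt[OF that, of n] by (auto simp: wH_def up_app)
    show "wH m (up n j) = z * wH m n" for n
      using hm_up_ge[of j n] by (auto simp: wH_def up_app)
    show "wH m (up n \<kappa>) = wH m n" if "\<kappa> \<in> {j+1..<K+1}" for \<kappa> n
      using that hm_up_ge[of \<kappa> n] by (auto simp: wH_def up_app)
    show "wH m (dn n \<kappa>) = wH (Suc m) n" if "\<kappa> \<in> {1..<j}" "n \<in> YY K \<kappa>" for \<kappa> n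
      using that hm_dn_lt[OF that(1), of n] by (auto simp: wH_def dn_app YY_def)
    show "wH m (dn n \<kappa>) = (if m = 0 then 1 else 0)" if "\<kappa> \<in> {j+1..<K+1}" "n \<in> YY K \<kappa>" for \<kappa> n
    proof -
      have nz: "n \<in> ZZ K (\<kappa>-1)" using that by (simp add: YY_def)
      have "hm n = 0" by (rule hm_ZZ[OF _ nz]) (use that in auto)
      moreover have "n j = 0" using nz that j2 by (auto simp: ZZ_def)
      ultimately have "hm n = 0" "n j = 0" by auto
      then show ?thesis using that hm_dn_ge[of \<kappa> n] by (auto simp: wH_def dn_app)
    qed
  qed (use wHb in auto)
  have e1: "II P (wH m) (ZZ K K) = (if m=0 then ZK else 0)"
  proof -
    have "II P (wH m) (ZZ K K) = II P (\<lambda>n. if m = 0 then 1 else 0) (ZZ K K)"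
    proof (rule II_cong)
      fix n assume n: "n \<in> ZZ K K"
      then have "hm n = 0" using jK by (intro hm_ZZ[OF _ n]) auto
      moreover have "n j = 0" using n j2 jK by (auto simp: ZZ_def)
      ultimately show "wH m n = (if m = 0 then 1 else 0)" by (simp add: wH_def)
    qed
    then show ?thesis by (simp add: II_if ZK_def)
  qed
  have e2: "II P (wH (Suc m)) (ZZ K (j-1)) = 0"
  proof (rule II_0)
    fix n assume n: "n \<in> ZZ K (j-1)"
    have "hm n = 0" by (rule hm_ZZ[OF _ n]) simp
    then show "wH (Suc m) n = 0" by (simp add: wH_def)
  qed
  have e3: "II P (\<lambda>n. wH m (dn n j)) (YY K j) = (if m = 0 then D else 0)"
  proof -
    have "II P (\<lambda>n. wH m (dn n j)) (YY K j) = II P (\<lambda>n. if m = 0 then z ^ (n j - 1) else 0) (YY K j)"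
    proof (rule II_cong)
      fix n assume n: "n \<in> YY K j"
      then have "hm n = 0" by (intro hm_ZZ[of "j-1"]) (auto simp: YY_def)
      then show "wH m (dn n j) = (if m = 0 then z ^ (n j - 1) else 0)"
        using hm_dn_ge[of j n] by (simp add: wH_def dn_app)
    qed
    then show ?thesis by (simp add: II_if D_def)
  qed
  show ?thesis using G e1 e2 e3
    by (simp add: H_def II_cmult II_if' II_if R0_def ZK_def s_def)
qed

definition wF where "wF n = z ^ n j"
definition F where "F = II P wF (states K)"

lemma summ_II: "A \<subseteq> states K \<Longrightarrow> (\<And>n. n \<in> states K \<Longrightarrow> \<bar>w n\<bar> \<le> 1) \<Longrightarrow> (\<lambda>n. w n * P n) summable_on A"
  by (rule summ_w[OF sP nn]) auto

lemma II_split: assumes "\<And>n. n \<in> states K \<Longrightarrow> \<bar>w n\<bar> \<le> 1"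
  shows "II P w (ZZ K (j-1)) = II P w (ZZ K j) + II P w (YY K j)"
proof -
  have u: "ZZ K (j-1) = ZZ K j \<union> YY K j" using j2 YY_eq[of j K] ZZ_mono[of "j-1" j K] by auto
  have d: "ZZ K j \<inter> YY K j = {}" using j2 YY_eq[of j K] by auto
  show ?thesis unfolding II_def u
    by (rule infsum_Un_disjoint[OF summ_II summ_II d]) (use assms ZZ_sub YY_sub in auto)
qed

lemma R2: "r j * (1 - z) * F = (1 - z) * D"
proof -
  have G: "(1 + sigma r K) * II P wF (states K) = II P wF (ZZ K K)
     + sigma r (j-1) * II P wF (states K)
     + r j * II P (\<lambda>n. z * wF n) (states K) + (sigma r K - sigma r j) * II P wF (states K)
     + (II P wF (states K) - II P wF (ZZ K (j-1))) + II P (\<lambda>n. wF (dn n j)) (YY K j)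
     + (II P (\<lambda>_. 1) (ZZ K j) - II P (\<lambda>_. 1) (ZZ K K))"
  proof (rule gen3[OF bal nn sP j2 jK])
    show "\<And>n. \<bar>wF n\<bar> \<le> 1" "\<And>n. \<bar>z * wF n\<bar> \<le> 1" "\<And>n. \<bar>1::real\<bar> \<le> 1"
      using zpow z0 z1 by (auto simp: wF_def abs_mult intro: mult_le_one)
    show "wF (up n \<kappa>) = wF n" if "\<kappa> \<in> {1..<j}" for \<kappa> n
      using that by (auto simp: wF_def up_app)
    show "wF (up n j) = z * wF n" for n by (auto simp: wF_def up_app)
    show "wF (up n \<kappa>) = wF n" if "\<kappa> \<in> {j+1..<K+1}" for \<kappa> n
      using that by (auto simp: wF_def up_app)
    show "wF (dn n \<kappa>) = wF n" if "\<kappa> \<in> {1..<j}" "n \<in> YY K \<kappa>" for \<kappa> n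
      using that by (auto simp: wF_def dn_app)
    show "wF (dn n \<kappa>) = 1" if "\<kappa> \<in> {j+1..<K+1}" "n \<in> YY K \<kappa>" for \<kappa> n
    proof -
      have "n \<in> ZZ K (\<kappa>-1)" using that by (simp add: YY_def)
      then have "n j = 0" using that j2 by (auto simp: ZZ_def)
      then show ?thesis using that by (auto simp: wF_def dn_app)
    qed
  qed (use zpow in \<open>auto simp: wF_def\<close>)
  have e1: "II P wF (ZZ K K) = ZK"
    unfolding ZK_def by (rule II_cong) (use j2 jK in \<open>auto simp: wF_def ZZ_def\<close>)
  have e3: "II P (\<lambda>n. wF (dn n j)) (YY K j) = D"
    unfolding D_def by (rule II_cong) (auto simp: wF_def dn_app)
  have e2: "II P wF (ZZ K (j-1)) = R0 + z * D"
  proof -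
    have "II P wF (ZZ K j) = R0"
      unfolding R0_def by (rule II_cong) (use j2 jK in \<open>auto simp: wF_def ZZ_def\<close>)
    moreover have "II P wF (YY K j) = z * D"
    proof -
      have "II P wF (YY K j) = II P (\<lambda>n. z * z ^ (n j - 1)) (YY K j)"
        by (rule II_cong) (auto simp: wF_def YY_def power_Suc[symmetric])
      then show ?thesis by (simp add: II_cmult D_def)
    qed
    ultimately show ?thesis using II_split[of wF] zpow by (simp add: wF_def)
  qed
  have sig: "sigma r j = sigma r (j-1) + r j"
    using j2 unfolding sigma_def by (cases j) auto
  show ?thesis using G e1 e2 e3 sig unfolding F_def II_cmult ZK_def R0_def by (simp add: algebra_simps)
qed

definition wN where "wN N n = (if n j = N then 1 else (0::real))"
definition AA where "AA N = II P (wN N) (states K)"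
definition EE where "EE N = II P (wN N) (YY K j)"

lemma EE0: "EE 0 = 0"
  unfolding EE_def by (rule II_0) (auto simp: wN_def YY_def)

lemma R3: "r j * AA N = r j * (if N = 0 then 0 else AA (N-1)) - EE N + EE (Suc N)"
proof -
  have G: "(1 + sigma r K) * II P (wN N) (states K) = II P (wN N) (ZZ K K)
     + sigma r (j-1) * II P (wN N) (states K)
     + r j * II P (if N = 0 then (\<lambda>_. 0) else wN (N-1)) (states K) + (sigma r K - sigma r j) * II P (wN N) (states K)
     + (II P (wN N) (states K) - II P (wN N) (ZZ K (j-1))) + II P (\<lambda>n. wN N (dn n j)) (YY K j)
     + (II P (\<lambda>_. if N = 0 then 1 else 0) (ZZ K j) - II P (\<lambda>_. if N = 0 then 1 else 0) (ZZ K K))"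
  proof (rule gen3[OF bal nn sP j2 jK])
    show "\<And>n. \<bar>wN N n\<bar> \<le> 1" "\<And>n. \<bar>(if N = 0 then (\<lambda>_. 0) else wN (N-1)) n\<bar> \<le> 1"
      "\<And>n. \<bar>if N = 0 then 1 else 0::real\<bar> \<le> 1"
      by (auto simp: wN_def)
    show "wN N (up n \<kappa>) = wN N n" if "\<kappa> \<in> {1..<j}" for \<kappa> n
      using that by (auto simp: wN_def up_app)
    show "wN N (up n j) = (if N = 0 then (\<lambda>_. 0) else wN (N-1)) n" for n by (auto simp: wN_def up_app)
    show "wN N (up n \<kappa>) = wN N n" if "\<kappa> \<in> {j+1..<K+1}" for \<kappa> n
      using that by (auto simp: wN_def up_app)
    show "wN N (dn n \<kappa>) = wN N n" if "\<kappa> \<in> {1..<j}" "n \<in> YY K \<kappa>" for \<kappa> n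
      using that by (auto simp: wN_def dn_app)
    show "wN N (dn n \<kappa>) = (if N = 0 then 1 else 0)" if "\<kappa> \<in> {j+1..<K+1}" "n \<in> YY K \<kappa>" for \<kappa> n
    proof -
      have "n \<in> ZZ K (\<kappa>-1)" using that by (simp add: YY_def)
      then have "n j = 0" using that j2 by (auto simp: ZZ_def)
      then show ?thesis using that by (auto simp: wN_def dn_app)
    qed
  qed (auto simp: wN_def)
  have e1: "II P (wN N) (ZZ K K) = (if N = 0 then ZK else 0)"
  proof -
    have "II P (wN N) (ZZ K K) = II P (\<lambda>n. if N = 0 then 1 else 0) (ZZ K K)"
      by (rule II_cong) (use j2 jK in \<open>auto simp: wN_def ZZ_def\<close>)
    then show ?thesis by (simp add: II_if ZK_def)
  qed
  have e3: "II P (\<lambda>n. wN N (dn n j)) (YY K j) = EE (Suc N)"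
    unfolding EE_def by (rule II_cong) (auto simp: wN_def dn_app YY_def)
  have e2: "II P (wN N) (ZZ K (j-1)) = (if N = 0 then R0 else 0) + EE N"
  proof -
    have "II P (wN N) (ZZ K j) = II P (\<lambda>n. if N = 0 then 1 else 0) (ZZ K j)"
      by (rule II_cong) (use j2 jK in \<open>auto simp: wN_def ZZ_def\<close>)
    then have "II P (wN N) (ZZ K j) = (if N = 0 then R0 else 0)" by (simp add: II_if R0_def)
    then show ?thesis using II_split[of "wN N"] unfolding EE_def by (simp add: wN_def)
  qed
  have sig: "sigma r j = sigma r (j-1) + r j"
    using j2 unfolding sigma_def by (cases j) auto
  have z0: "II P (\<lambda>_. 0) (states K) = 0" by (rule II_0) simp
  show ?thesis using G e1 e2 e3 sig EE0 z0 unfolding AA_def II_if' ZK_def R0_def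
    by (simp add: algebra_simps II_if split: if_splits)
qed

end



lemma partition:
  fixes f :: "'a \<Rightarrow> real" and \<phi> :: "'a \<Rightarrow> nat"
  assumes sf: "f summable_on A"
  shows "((\<lambda>N. infsum (\<lambda>n. if \<phi> n = N then f n else 0) A) has_sum infsum f A) UNIV"
proof -
  have 1: "(f has_sum infsum f A) A" using sf by simp
  have inj: "inj_on (\<lambda>n. (\<phi> n, n)) A" by (auto simp: inj_on_def)
  have img: "(\<lambda>n. (\<phi> n, n)) ` A = Sigma UNIV (\<lambda>N. {n\<in>A. \<phi> n = N})" by auto
  have "((f \<circ> snd) has_sum infsum f A) ((\<lambda>n. (\<phi> n, n)) ` A)"
    using has_sum_reindex[OF inj, of "f \<circ> snd"] 1 by (simp add: o_def)
  then have S: "((\<lambda>p. f (snd p)) has_sum infsum f A) (Sigma UNIV (\<lambda>N. {n\<in>A. \<phi> n = N}))"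
    using img by (simp add: o_def)
  have B: "((\<lambda>y. f (snd (N,y))) has_sum infsum (\<lambda>n. if \<phi> n = N then f n else 0) A) {n\<in>A. \<phi> n = N}" for N
  proof -
    have sN: "f summable_on {n\<in>A. \<phi> n = N}" by (rule summable_on_subset[OF sf]) auto
    have "infsum (\<lambda>n. if \<phi> n = N then f n else 0) A = infsum f {n\<in>A. \<phi> n = N}"
      by (rule infsum_cong_neutral) auto
    then show ?thesis using sN by simp
  qed
  show ?thesis by (rule has_sum_Sigma'[OF S B])
qed

lemma rec_solve:
  fixes H :: "nat \<Rightarrow> real"
  assumes sH: "summable H" and a: "1 \<le> a"
    and rec: "\<And>m. H (Suc (Suc m)) = (a + b) * H (Suc m) - a * b * H m"
  shows "H (Suc m) = b * H m"
proof -
  define E where "E m = H (Suc m) - b * H m" for m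
  have Es: "E (Suc m) = a * E m" for m using rec[of m] by (simp add: E_def algebra_simps)
  have Ep: "E m = a^m * E 0" for m by (induct m) (simp_all add: Es)
  have "H \<longlonglongrightarrow> 0" by (rule summable_LIMSEQ_zero[OF sH])
  moreover then have "(\<lambda>m. H (Suc m)) \<longlonglongrightarrow> 0" by (rule LIMSEQ_Suc)
  ultimately have "E \<longlonglongrightarrow> 0 - b * 0" unfolding E_def by (intro tendsto_diff tendsto_mult tendsto_const)
  then have lim: "(\<lambda>m. \<bar>E m\<bar>) \<longlonglongrightarrow> 0" by (intro tendsto_rabs_zero) simp
  have "\<bar>E 0\<bar> \<le> \<bar>E m\<bar>" for m
  proof -
    have "1 \<le> a ^ m" using a by (rule one_le_power)
    then have "1 * \<bar>E 0\<bar> \<le> a^m * \<bar>E 0\<bar>" by (intro mult_right_mono) auto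
    then show ?thesis using a Ep[of m] by (simp add: abs_mult)
  qed
  then have "\<bar>E 0\<bar> \<le> 0" by (intro LIMSEQ_le_const[OF lim]) auto
  then have "E m = 0" using Ep[of m] by simp
  then show ?thesis by (simp add: E_def)
qed

context setting begin

definition D1 where "D1 = II P (\<lambda>_. 1) (YY K j)"

lemma infP: "infsum P (states K) = 1" using norm by (simp add: infsumI)

lemma AA_sum: "(AA has_sum 1) UNIV"
proof -
  have "((\<lambda>N. infsum (\<lambda>n. if n j = N then P n else 0) (states K)) has_sum infsum P (states K)) UNIV"
    by (rule partition[OF sP])
  moreover have "AA = (\<lambda>N. infsum (\<lambda>n. if n j = N then P n else 0) (states K))"
    unfolding AA_def II_def wN_def by (rule ext, rule infsum_cong) simp
  ultimately show ?thesis using infP by simp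
qed

lemma EE_sum: "(EE has_sum D1) UNIV"
proof -
  have sY: "P summable_on YY K j" by (rule summable_on_subset[OF sP YY_sub])
  have "((\<lambda>N. infsum (\<lambda>n. if n j = N then P n else 0) (YY K j)) has_sum infsum P (YY K j)) UNIV"
    by (rule partition[OF sY])
  moreover have "EE = (\<lambda>N. infsum (\<lambda>n. if n j = N then P n else 0) (YY K j))"
    unfolding EE_def II_def wN_def by (rule ext, rule infsum_cong) simp
  moreover have "D1 = infsum P (YY K j)" unfolding D1_def II_def by simp
  ultimately show ?thesis by simp
qed

lemma AE: "r j * AA N = EE (Suc N)"
proof (induct N)
  case 0 then show ?case using R3[of 0] EE0 by simp
next
  case (Suc N) then show ?case using R3[of "Suc N"] by simp
qed

lemma rD1: "D1 = r j"
proof -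
  have "(\<lambda>N. r j * AA N) sums (r j * 1)" by (rule sums_mult[OF has_sum_imp_sums[OF AA_sum]])
  then have s1: "(\<lambda>N. EE (Suc N)) sums (r j)" by (simp only: AE mult_1_right)
  have "EE sums (D1 + EE 0)" using has_sum_imp_sums[OF EE_sum] EE0 by simp
  then have s2: "(\<lambda>N. EE (Suc N)) sums D1" by (simp only: sums_Suc_iff)
  show ?thesis using sums_unique2[OF s2 s1] .
qed

lemma D_rF: "D = r j * F"
proof (cases "z = 1")
  case True
  have "D = D1" unfolding D_def D1_def using True by simp
  moreover have "F = 1" unfolding F_def wF_def II_def using True infP by simp
  ultimately show ?thesis using rD1 by simp
next
  case False
  then have nz: "1 - z \<noteq> 0" by simp
  have "(1 - z) * (r j * F) = (1 - z) * D" using R2 by (simp only: ac_simps)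
  then show ?thesis using nz by simp
qed

lemma H_sum: "(H has_sum F) UNIV"
proof -
  have sf: "(\<lambda>n. wF n * P n) summable_on states K"
    by (rule summ_II) (use zpow in \<open>auto simp: wF_def\<close>)
  have "((\<lambda>m. infsum (\<lambda>n. if hm n = m then wF n * P n else 0) (states K)) has_sum infsum (\<lambda>n. wF n * P n) (states K)) UNIV"
    by (rule partition[OF sf])
  moreover have "H = (\<lambda>m. infsum (\<lambda>n. if hm n = m then wF n * P n else 0) (states K))"
    unfolding H_def II_def wH_def wF_def by (rule ext, rule infsum_cong) simp
  ultimately show ?thesis unfolding F_def II_def by simp
qed

end


context setting begin

definition cc where "cc = 1 + sigma r j - r j * z"
definition qq where "qq = sqrt ((1 + sigma r j - r j * z)^2 - 4 * sigma r (j - 1))"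
abbreviation "ap \<equiv> eta_plus r j z"
abbreviation "bm \<equiv> eta_minus r j z"

lemma sig: "sigma r j = s + r j"
  using j2 unfolding sigma_def s_def by (cases j) auto
lemma rjpos: "r j > 0" using rpos j2 jK by auto
lemma spos: "s > 0"
  unfolding s_def sigma_def using rpos j2 jK by (intro sum_pos) auto
lemma sigj_le: "sigma r j \<le> sigma r K"
  unfolding sigma_def using rpos jK by (intro sum_mono2) (auto simp: less_imp_le)
lemma sigj_lt: "sigma r j < 1" using sigj_le rlt1 by simp
lemma s_lt: "s < 1" using sigj_lt sig rjpos by simp
lemma c_ge: "1 + s \<le> cc"
proof -
  have "0 \<le> r j * (1 - z)" using rjpos z1 by simp
  then show ?thesis unfolding cc_def using sig by (simp add: algebra_simps)
qed
lemma disc: "(1-s)^2 \<le> cc^2 - 4 * s"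
proof -
  have "(1+s)^2 \<le> cc^2" using c_ge spos by (intro power_mono) auto
  then show ?thesis by (simp add: power2_eq_square algebra_simps)
qed
lemma q_ge: "1 - s \<le> qq"
proof -
  have "sqrt ((1-s)^2) \<le> qq" unfolding qq_def cc_def[symmetric] s_def[symmetric] using disc by (rule real_sqrt_le_mono)
  then show ?thesis using s_lt by simp
qed
lemma qsq: "qq^2 = cc^2 - 4 * s"
proof -
  have "0 \<le> cc^2 - 4 * s" using disc zero_le_power2[of "1-s"] by linarith
  then show ?thesis unfolding qq_def cc_def[symmetric] s_def[symmetric] by (rule real_sqrt_pow2)
qed
lemma a_eq: "ap = (cc + qq)/2" unfolding eta_plus_def cc_def qq_def by simp
lemma b_eq: "bm = (cc - qq)/2" unfolding eta_minus_def cc_def qq_def by simp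
lemma ab_sum: "ap + bm = cc"
proof -
  have "(cc + qq)/2 + (cc - qq)/2 = ((cc + qq) + (cc - qq))/2" by (rule add_divide_distrib[symmetric])
  also have "\<dots> = cc" by simp
  finally show ?thesis unfolding a_eq b_eq .
qed
lemma ab_prod: "ap * bm = s"
proof -
  have "ap * bm = (cc^2 - qq^2)/4" unfolding a_eq b_eq by (simp add: power2_eq_square algebra_simps)
  then show ?thesis using qsq by simp
qed
lemma a_ge: "1 \<le> ap" unfolding a_eq using c_ge q_ge by simp
lemma b_eq2: "bm = s / ap" using ab_prod a_ge by (simp add: field_simps)
lemma b_pos: "0 < bm" using b_eq2 spos a_ge by simp
lemma b_lt: "bm < 1"
proof -
  have "s / ap \<le> s / 1" using a_ge spos by (intro divide_left_mono) auto
  then show ?thesis using b_eq2 s_lt by simp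
qed

lemma Hrec: "H (Suc (Suc m)) = (ap + bm) * H (Suc m) - ap * bm * H m"
  using R1[of "Suc m"] unfolding ab_sum ab_prod cc_def using sig by (simp add: algebra_simps)

lemma Hsummable: "summable H" using has_sum_imp_sums[OF H_sum] by (rule sums_summable)

lemma Hgeo: "H m = bm^m * H 0"
proof (induct m)
  case (Suc m)
  then show ?case using rec_solve[OF Hsummable a_ge Hrec, of m] by simp
qed simp

lemma H0F: "H 0 = (1 - bm) * F"
proof -
  have "(\<lambda>m. bm^m) sums (1 / (1 - bm))" using b_pos b_lt by (intro geometric_sums) simp
  then have "(\<lambda>m. H 0 * bm^m) sums (H 0 * (1 / (1 - bm)))" by (rule sums_mult)
  moreover have "(\<lambda>m. H 0 * bm^m) = H"
  proof (rule ext)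
    fix m show "H 0 * bm^m = H m" using Hgeo[of m] by (simp add: mult.commute)
  qed
  ultimately have s1: "H sums (H 0 * (1 / (1 - bm)))" by simp
  have s2: "H sums F" using has_sum_imp_sums[OF H_sum] .
  have "F = H 0 / (1 - bm)" using sums_unique2[OF s2 s1] by simp
  then show ?thesis using b_lt by (simp add: field_simps)
qed

lemma key: "F * (ap - sigma r j) = R0"
proof -
  have e: "cc * H 0 = bm * H 0 + r j * F + R0"
    using R1[of 0] Hgeo[of 1] D_rF unfolding cc_def by (simp add: algebra_simps)
  then have "(ap + bm) * H 0 = bm * H 0 + r j * F + R0" unfolding ab_sum .
  then have "ap * H 0 + bm * H 0 = bm * H 0 + r j * F + R0" by (simp only: distrib_right)
  then have "ap * H 0 = r j * F + R0" by linarith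
  then have "ap * ((1 - bm) * F) = r j * F + R0" using H0F by simp
  then have "ap * F - (ap * bm) * F = r j * F + R0" by (simp add: algebra_simps)
  then have "ap * F - s * F = r j * F + R0" unfolding ab_prod .
  then have "R0 = ap * F - (s + r j) * F" by (simp add: algebra_simps)
  then show ?thesis unfolding sig by (simp add: algebra_simps)
qed

lemma eta1: "eta_plus r j 1 = 1"
proof -
  have "(1 + sigma r j - r j * 1)^2 - 4 * sigma r (j-1) = (1 - s)^2"
    using sig by (simp add: s_def power2_eq_square algebra_simps)
  moreover have "sqrt ((1 - s)^2) = 1 - s" using s_lt by simp
  ultimately show ?thesis unfolding eta_plus_def using sig by (simp add: s_def)
qed

lemma R0_val: "R0 = 1 - sigma r j"
proof -
  interpret t: setting K r P j 1 using rpos rlt1 bal nn norm j2 jK by unfold_locales auto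
  have "t.F = 1" unfolding t.F_def t.wF_def II_def using infP by simp
  then show ?thesis using t.key eta1 unfolding R0_def t.R0_def by simp
qed

lemma final1: "F = (1 - sigma r j) / (ap - sigma r j)"
proof -
  have "ap - sigma r j > 0" using a_ge sigj_lt by simp
  then show ?thesis using key R0_val by (simp add: field_simps)
qed

lemma i1: "(ap - sigma r j) * (sigma r j - bm) = r j * (1 - sigma r j * z)"
proof -
  have "(ap - sigma r j) * (sigma r j - bm) = sigma r j * (ap + bm) - ap * bm - (sigma r j)^2"
    by (simp add: power2_eq_square algebra_simps)
  then show ?thesis unfolding ab_sum ab_prod cc_def using sig by (simp add: power2_eq_square algebra_simps)
qed

lemma i2: "(sigma r j - bm) * (1 - bm) = r j * (1 - z * bm)"
proof -
  have bb: "bm * bm = cc * bm - s"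
  proof -
    have "bm = cc - ap" using ab_sum by linarith
    then have "bm * bm = (cc - ap) * bm" by simp
    also have "\<dots> = cc * bm - ap * bm" by (simp add: algebra_simps)
    finally show ?thesis using ab_prod by simp
  qed
  have "(sigma r j - bm) * (1 - bm) = sigma r j - sigma r j * bm - bm + bm * bm" by (simp add: algebra_simps)
  also have "\<dots> = sigma r j - sigma r j * bm - bm + (cc * bm - s)" by (simp only: bb)
  also have "\<dots> = (sigma r j - s) - r j * z * bm" unfolding cc_def by (simp add: algebra_simps)
  also have "\<dots> = r j * (1 - z * bm)" using sig by (simp add: algebra_simps)
  finally show ?thesis .
qed

lemma swap4: "(x::real) / u * (y / v) = x / v * (y / u)" by simp

lemma final2: "(1 - sigma r j) / (ap - sigma r j)
           = (1 - sigma r j) / r j * ((sigma r j - bm) / (1 - sigma r j * z))"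
proof -
  have p1: "ap - sigma r j > 0" using a_ge sigj_lt by simp
  have "sigma r j * z \<le> sigma r j" using z1 sig spos rjpos by (intro mult_left_le) auto
  then have p2: "1 - sigma r j * z > 0" using sigj_lt by simp
  have "(sigma r j - bm) / (1 - sigma r j * z) = r j / (ap - sigma r j)"
    using p1 p2 i1 by (simp add: frac_eq_eq mult.commute)
  then show ?thesis using rjpos by simp
qed

lemma final3: "(1 - sigma r j) / r j * ((sigma r j - bm) / (1 - sigma r j * z))
    = (1 - sigma r j) / (1 - sigma r j * z) * ((1 - z * bm) / (1 - bm))"
proof -
  have eq: "(sigma r j - bm) / r j = (1 - z * bm) / (1 - bm)"
    using i2 rjpos b_lt by (simp add: frac_eq_eq mult.commute)
  have "(1 - sigma r j) / r j * ((sigma r j - bm) / (1 - sigma r j * z))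
     = (1 - sigma r j) / (1 - sigma r j * z) * ((sigma r j - bm) / r j)" by (rule swap4)
  also have "\<dots> = (1 - sigma r j) / (1 - sigma r j * z) * ((1 - z * bm) / (1 - bm))" by (simp only: eq)
  finally show ?thesis .
qed

end


theorem mainTheorem5:
  fixes K :: nat and r :: "nat \<Rightarrow> real" and P :: "(nat \<Rightarrow> nat) \<Rightarrow> real"
    and j :: nat and z :: real
  assumes K2: "K \<ge> 2"
    and rpos: "\<forall>k\<in>{1..K}. r k > 0"
    and rlt1: "sigma r K < 1"
    and bal: "balance K r P"
    and nonneg: "\<forall>n\<in>states K. P n \<ge> 0"
    and norm: "(P has_sum 1) (states K)"
    and j: "j \<in> {2..K}"
    and z: "z \<in> {0..1}"
  shows "((\<lambda>n. P n * z ^ n j) has_sum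
            ((1 - sigma r j) / (eta_plus r j z - sigma r j))) (states K)
       \<and> (1 - sigma r j) / (eta_plus r j z - sigma r j)
           = (1 - sigma r j) / r j * ((sigma r j - eta_minus r j z) / (1 - sigma r j * z))
       \<and> (1 - sigma r j) / r j * ((sigma r j - eta_minus r j z) / (1 - sigma r j * z))
           = (1 - sigma r j) / (1 - sigma r j * z)
             * ((1 - z * eta_minus r j z) / (1 - eta_minus r j z))"
proof -
  interpret setting K r P j z using rpos rlt1 bal nonneg norm j z by unfold_locales auto
  have "((\<lambda>n. wF n * P n) has_sum F) (states K)"
    unfolding F_def II_def by (rule summ_w'[OF sP nn order_refl]) (use zpow in \<open>auto simp: wF_def\<close>)
  then have hs: "((\<lambda>n. P n * z ^ n j) has_sum F) (states K)" by (simp add: wF_def mult.commute)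
  show ?thesis using hs final1 final2 final3 by simp
qed

end
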